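(* Let $n\ge k\ge1$ and let $Y\in\mathbb{F}_2^{N_k}$ be fixed with $Y_\emptyset=1$. Let $\ell=(\ell_1,\dots,\ell_k)$ be a uniformly random $k$-tuple of linearly independent linear forms on $\mathbb{F}_2^n$ and, independently, $\varepsilon\in\mathbb{F}_2^k$ uniformly random; set $\alpha_i=1-\varepsilon_i$. Then $$\mathbf{P}\big(\mathcal{L}_{\ell,\alpha}(Y)=0\big)\le 1-2^{-k}.$$
   Context: Let $N_k=\sum_{i=0}^k\binom{n}{i}$ and index the coordinates of $\mathbb{F}_2^{N_k}$ by subsets $S\subseteq[n]$ with $|S|\le k$. For linear forms $\ell_1,\dots,\ell_k$ on $\mathbb{F}_2^n$ (with $\ell_i(x)=\sum_s a_{i,s}x_s$) and $\alpha\in\mathbb{F}_2^k$, expand the polynomial $P_{\ell,\alpha}(x)=\prod_{i=1}^k(\ell_i(x)+\alpha_i)$ in $\mathbb{F}_2[x_1,\dots,x_n]$ and reduce using $x_s^2=x_s$, obtaining the multilinear polynomial $\sum_{S\subseteq[n],|S|\le k}c_S(\ell,\alpha)\prod_{s\in S}x_s$ (the coefficients $c_S(\ell,\alpha)\in\mathbb{F}_2$ are thereby defined; $c_\emptyset$ is the constant term). Define the linear form $\mathcal{L}_{\ell,\alpha}(Y)=\sum_{|S|\le k}c_S(\ell,\alpha)Y_S$ on $\mathbb{F}_2^{N_k}$. *)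

theory Defs
  imports Complex_Main "HOL-Library.FuncSet"
begin

text \<open>F_2 is modelled by bool (True = 1). A k-tuple of linear forms on F_2^n is a
 coefficient matrix a :: nat \<Rightarrow> nat \<Rightarrow> bool, a i s = a_{i,s} for i < k, s < n
 (False outside). A vector in F_2^k is a function nat \<Rightarrow> bool (False outside {0..<k}).\<close>

definition forms :: "nat \<Rightarrow> nat \<Rightarrow> (nat \<Rightarrow> nat \<Rightarrow> bool) set" where
  "forms n k = {a. \<forall>i s. (k \<le> i \<or> n \<le> s) \<longrightarrow> \<not> a i s}"

definition lin_indep_forms :: "nat \<Rightarrow> nat \<Rightarrow> (nat \<Rightarrow> nat \<Rightarrow> bool) \<Rightarrow> bool" where
  "lin_indep_forms n k a \<longleftrightarrow>
     (\<forall>I. I \<subseteq> {0..<k} \<and> I \<noteq> {} \<longrightarrow> (\<exists>s<n. odd (card {i\<in>I. a i s})))"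

definition bvecs :: "nat \<Rightarrow> (nat \<Rightarrow> bool) set" where
  "bvecs k = {e. \<forall>i. k \<le> i \<longrightarrow> \<not> e i}"

text \<open>Coefficient c_S(l,alpha) of the multilinear reduction of prod_i (l_i(x) + alpha_i):
 expanding the product, each term chooses for every factor i either the constant alpha_i
 (None) or a variable x_s with a_{i,s} = 1 (Some s); after x_s^2 = x_s the term is the
 monomial on the set of chosen variables. c_S is the parity of the number of terms
 giving monomial S.\<close>
definition coeffS :: "nat \<Rightarrow> nat \<Rightarrow> (nat \<Rightarrow> nat \<Rightarrow> bool) \<Rightarrow> (nat \<Rightarrow> bool) \<Rightarrow> nat set \<Rightarrow> bool" where
  "coeffS n k a alpha S = odd (card {f \<in> {0..<k} \<rightarrow>\<^sub>E insert None (Some ` {0..<n}).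
      (\<forall>i<k. (case f i of None \<Rightarrow> alpha i | Some s \<Rightarrow> a i s))
      \<and> {s. \<exists>i<k. f i = Some s} = S})"

definition Lform :: "nat \<Rightarrow> nat \<Rightarrow> (nat \<Rightarrow> nat \<Rightarrow> bool) \<Rightarrow> (nat \<Rightarrow> bool) \<Rightarrow> (nat set \<Rightarrow> bool) \<Rightarrow> bool" where
  "Lform n k a alpha Y = odd (card {S. S \<subseteq> {0..<n} \<and> card S \<le> k \<and> coeffS n k a alpha S \<and> Y S})"

end

theory Submission
  imports Defs
begin

lemma even_card_involution:
  assumes "finite A" "\<And>x. x \<in> A \<Longrightarrow> g x \<in> A" "\<And>x. x \<in> A \<Longrightarrow> g x \<noteq> x"
    "\<And>x. x \<in> A \<Longrightarrow> g (g x) = x"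
  shows "even (card A)"
  using assms
proof (induction "card A" arbitrary: A rule: less_induct)
  case less
  show ?case
  proof (cases "A = {}")
    case True then show ?thesis by simp
  next
    case False
    then obtain x where x: "x \<in> A" by blast
    let ?B = "A - {x, g x}"
    have sub: "{x, g x} \<subseteq> A" using x less.prems by auto
    have c2: "card {x, g x} = 2" using less.prems(3)[OF x] by auto
    have cB: "card ?B = card A - 2"
      using card_Diff_subset[OF _ sub] c2 by simp
    have cA: "card A \<ge> 2" using card_mono[OF less.prems(1) sub] c2 by simp
    have "even (card ?B)"
    proof (rule less.hyps)
      show "card ?B < card A" using cB cA by simp
      show "finite ?B" using less.prems by simp
      fix y assume y: "y \<in> ?B"
      show "g y \<noteq> y" using y less.prems by auto
      show "g (g y) = y" using y less.prems by auto
      have "g y \<in> A" "g y \<noteq> x" "g y \<noteq> g x"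
        using y less.prems x by (auto, metis)
      then show "g y \<in> ?B" by simp
    qed
    moreover have "card A = card ?B + 2" using cB cA by simp
    ultimately show ?thesis by simp
  qed
qed

lemma bvecs_bij: "bij_betw (\<lambda>e. {i. e i}) (bvecs k) (Pow {0..<k})"
proof (rule bij_betw_imageI)
  show "inj_on (\<lambda>e. {i. e i}) (bvecs k)"
    by (rule inj_onI) (simp add: set_eq_iff fun_eq_iff)
  show "(\<lambda>e. {i. e i}) ` bvecs k = Pow {0..<k}"
  proof
    show "(\<lambda>e. {i. e i}) ` bvecs k \<subseteq> Pow {0..<k}"
      unfolding bvecs_def by (auto simp: not_le[symmetric])
    show "Pow {0..<k} \<subseteq> (\<lambda>e. {i. e i}) ` bvecs k"
    proof
      fix X assume "X \<in> Pow {0..<k}"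
      then have "(\<lambda>i. i \<in> X) \<in> bvecs k" "X = {i. (\<lambda>i. i \<in> X) i}" unfolding bvecs_def by auto
      then show "X \<in> (\<lambda>e. {i. e i}) ` bvecs k" by blast
    qed
  qed
qed

lemma finite_bvecs: "finite (bvecs k)"
  using bij_betw_finite[OF bvecs_bij] by simp

lemma card_bvecs: "card (bvecs k) = 2 ^ k"
  using bij_betw_same_card[OF bvecs_bij] by (simp add: card_Pow)

lemma finite_forms: "finite (forms n k)"
proof (rule inj_on_finite[where f = "\<lambda>a. {(i,s). a i s}" and B = "Pow ({0..<k} \<times> {0..<n})"])
  show "inj_on (\<lambda>a. {(i, s). a i s}) (forms n k)"
  proof (rule inj_onI)
    fix a b assume "{(i, s). a i s} = {(i, s). b i s}"
    then have "a i s = b i s" for i s by (metis (mono_tags) case_prodI mem_Collect_eq prod.case)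
    then show "a = b" by (intro ext)
  qed
  show "(\<lambda>a. {(i, s). a i s}) ` forms n k \<subseteq> Pow ({0..<k} \<times> {0..<n})"
    unfolding forms_def by (auto simp: not_le[symmetric])
qed simp


lemma coeff_even:
  assumes "S \<noteq> {}"
  shows "even (card {e \<in> bvecs k. coeffS n k a (\<lambda>i. i < k \<and> \<not> e i) S})"
proof -
  define FF where "FF = {0..<k} \<rightarrow>\<^sub>E insert None (Some ` {0..<n})"
  define X where "X e = {f \<in> FF. (\<forall>i<k. (case f i of None \<Rightarrow> (i < k \<and> \<not> e i) | Some s \<Rightarrow> a i s))
      \<and> {s. \<exists>i<k. f i = Some s} = S}" for e :: "nat \<Rightarrow> bool"
  have cS: "coeffS n k a (\<lambda>i. i < k \<and> \<not> e i) S = odd (card (X e))" for e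
    unfolding coeffS_def X_def FF_def by simp
  have finX: "finite (X e)" for e
  proof (rule finite_subset[of _ FF])
    show "finite FF" unfolding FF_def by (intro finite_PiE) auto
  qed (auto simp: X_def)
  define i0 where "i0 f = (LEAST i. i < k \<and> f i \<noteq> None)" for f :: "nat \<Rightarrow> nat option"
  define g where "g p = (case p of (e, f) \<Rightarrow> ((e(i0 f := \<not> e (i0 f))), f))"
    for p :: "(nat \<Rightarrow> bool) \<times> (nat \<Rightarrow> nat option)"
  have key: "i0 f < k \<and> f (i0 f) \<noteq> None" if "f \<in> X e" for e f
  proof -
    from assms obtain s where "s \<in> S" by blast
    with that obtain i where "i < k \<and> f i \<noteq> None" unfolding X_def by auto
    then show ?thesis unfolding i0_def by (rule LeastI)
  qed
  have "even (card (Sigma (bvecs k) X))"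
  proof (rule even_card_involution[where g = g])
    show "finite (Sigma (bvecs k) X)" using finite_bvecs finX by auto
  next
    fix p assume p: "p \<in> Sigma (bvecs k) X"
    then obtain e f where ef: "p = (e, f)" "e \<in> bvecs k" "f \<in> X e" by auto
    have k: "i0 f < k" "f (i0 f) \<noteq> None" using key[OF ef(3)] by auto
    show "g p \<noteq> p" using ef by (auto simp: g_def fun_eq_iff)
    show "g (g p) = p" using ef by (auto simp: g_def)
    have "e(i0 f := \<not> e (i0 f)) \<in> bvecs k" using ef(2) k unfolding bvecs_def by auto
    moreover have "f \<in> X (e(i0 f := \<not> e (i0 f)))"
    proof -
      have "(case f i of None \<Rightarrow> (i < k \<and> \<not> (e(i0 f := \<not> e (i0 f))) i) | Some s \<Rightarrow> a i s)
          = (case f i of None \<Rightarrow> (i < k \<and> \<not> e i) | Some s \<Rightarrow> a i s)" for i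
        using k by (cases "f i"; cases "i = i0 f") auto
      then show ?thesis using ef(3) unfolding X_def by simp
    qed
    ultimately show "g p \<in> Sigma (bvecs k) X" using ef by (simp add: g_def)
  qed
  then have "even (\<Sum>e\<in>bvecs k. card (X e))" using finite_bvecs finX by simp
  then have "even (card {e \<in> bvecs k. odd (card (X e))})" using finite_bvecs by (simp add: even_sum_iff)
  then show ?thesis by (simp add: cS)
qed

lemma coeff_empty:
  "card {e \<in> bvecs k. coeffS n k a (\<lambda>i. i < k \<and> \<not> e i) {}} = 1"
proof -
  define FF where "FF = {0..<k} \<rightarrow>\<^sub>E insert None (Some ` {0..<n})"
  define X where "X e = {f \<in> FF. (\<forall>i<k. (case f i of None \<Rightarrow> (i < k \<and> \<not> e i) | Some s \<Rightarrow> a i s))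
      \<and> {s. \<exists>i<k. f i = Some s} = {}}" for e :: "nat \<Rightarrow> bool"
  have cS: "coeffS n k a (\<lambda>i. i < k \<and> \<not> e i) {} = odd (card (X e))" for e
    unfolding coeffS_def X_def FF_def by simp
  define f0 where "f0 = (\<lambda>i::nat. if i < k then (None::nat option) else undefined)"
  have X: "X e = (if (\<forall>i<k. \<not> e i) then {f0} else {})" for e
  proof -
    have "f \<in> X e \<longleftrightarrow> f = f0 \<and> (\<forall>i<k. \<not> e i)" for f
    proof
      assume f: "f \<in> X e"
      then have N: "\<forall>i<k. f i = None" unfolding X_def by (auto, metis not_None_eq)
      have "f \<in> FF" using f unfolding X_def by auto
      then have "f i = undefined" if "\<not> i < k" for i using that unfolding FF_def PiE_def extensional_def by auto
      with N have "f = f0" unfolding f0_def by auto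
      moreover have "\<forall>i<k. \<not> e i" using f N unfolding X_def by auto
      ultimately show "f = f0 \<and> (\<forall>i<k. \<not> e i)" by simp
    next
      assume "f = f0 \<and> (\<forall>i<k. \<not> e i)"
      then show "f \<in> X e" unfolding X_def FF_def f0_def by (auto simp: PiE_def extensional_def)
    qed
    then show ?thesis by auto
  qed
  have "{e \<in> bvecs k. coeffS n k a (\<lambda>i. i < k \<and> \<not> e i) {}} = {\<lambda>_. False}"
  proof -
    have "e \<in> bvecs k \<and> (\<forall>i<k. \<not> e i) \<longleftrightarrow> e = (\<lambda>_. False)" for e
      unfolding bvecs_def by (auto simp: fun_eq_iff not_le[symmetric])
    then show ?thesis by (auto simp: cS X)
  qed
  then show ?thesis by simp
qed

lemma L_odd:
  assumes "Y {}"
  shows "odd (card {e \<in> bvecs k. Lform n k a (\<lambda>i. i < k \<and> \<not> e i) Y})"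
proof -
  let ?C = "\<lambda>e S. coeffS n k a (\<lambda>i. i < k \<and> \<not> e i) S"
  define SS where "SS = {S. S \<subseteq> {0..<n} \<and> card S \<le> k \<and> Y S}"
  have finSS: "finite SS" unfolding SS_def by (rule finite_subset[of _ "Pow {0..<n}"]) auto
  have L: "Lform n k a (\<lambda>i. i < k \<and> \<not> e i) Y = odd (card {S\<in>SS. ?C e S})" for e
  proof -
    have "{S. S \<subseteq> {0..<n} \<and> card S \<le> k \<and> ?C e S \<and> Y S} = {S\<in>SS. ?C e S}"
      unfolding SS_def by auto
    then show ?thesis unfolding Lform_def by simp
  qed
  have cardsum: "card {S\<in>SS. ?C e S} = (\<Sum>S\<in>SS. of_bool (?C e S))" for e
    using finSS by (simp add: Int_def)
  have cardsum2: "card {e\<in>bvecs k. ?C e S} = (\<Sum>e\<in>bvecs k. of_bool (?C e S))" for S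
    using finite_bvecs by (simp add: Int_def)
  have "(\<Sum>e\<in>bvecs k. card {S\<in>SS. ?C e S}) = (\<Sum>S\<in>SS. card {e\<in>bvecs k. ?C e S})"
    unfolding cardsum cardsum2 by (rule sum.swap)
  moreover have "odd (\<Sum>S\<in>SS. card {e\<in>bvecs k. ?C e S})"
  proof -
    have "{S\<in>SS. odd (card {e\<in>bvecs k. ?C e S})} = {{}}"
      using coeff_even[of _ k n a] coeff_empty[of k n a] assms unfolding SS_def by auto
    then show ?thesis using finSS by (simp add: even_sum_iff)
  qed
  ultimately have "odd (\<Sum>e\<in>bvecs k. card {S\<in>SS. ?C e S})" by simp
  then have "odd (card {e\<in>bvecs k. odd (card {S\<in>SS. ?C e S})})"
    using finite_bvecs by (simp add: even_sum_iff)
  then show ?thesis by (simp add: L)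
qed


theorem mainTheorem6:
  fixes n k :: nat and Y :: "nat set \<Rightarrow> bool"
  assumes "1 \<le> k" and "k \<le> n" and "Y {}"
  defines "\<Omega> \<equiv> {a \<in> forms n k. lin_indep_forms n k a} \<times> bvecs k"
  shows "real (card {(a, \<epsilon>) \<in> \<Omega>. \<not> Lform n k a (\<lambda>i. i < k \<and> \<not> \<epsilon> i) Y})
           / real (card \<Omega>) \<le> 1 - 1 / 2 ^ k"
proof -
  define A where "A = {a \<in> forms n k. lin_indep_forms n k a}"
  define Bad where "Bad a = {e \<in> bvecs k. \<not> Lform n k a (\<lambda>i. i < k \<and> \<not> e i) Y}" for a
  have finA: "finite A" unfolding A_def using finite_forms by simp
  have finBad: "finite (Bad a)" for a unfolding Bad_def using finite_bvecs by simp
  have set: "{(a, \<epsilon>) \<in> \<Omega>. \<not> Lform n k a (\<lambda>i. i < k \<and> \<not> \<epsilon> i) Y} = Sigma A Bad"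
    unfolding \<Omega>_def A_def Bad_def by auto
  have cO: "card \<Omega> = card A * 2 ^ k" unfolding \<Omega>_def A_def by (simp add: card_cartesian_product card_bvecs)
  have bB: "card (Bad a) \<le> 2 ^ k - 1" for a
  proof -
    let ?G = "{e \<in> bvecs k. Lform n k a (\<lambda>i. i < k \<and> \<not> e i) Y}"
    have "odd (card ?G)" using L_odd[of Y k n a, OF assms(3)] .
    then have g1: "card ?G \<ge> 1" by (cases "card ?G") auto
    have "Bad a = bvecs k - ?G" unfolding Bad_def by auto
    then have "card (Bad a) = 2 ^ k - card ?G"
      using card_Diff_subset[of ?G "bvecs k"] finite_bvecs card_bvecs
      by (metis (no_types, lifting) finite_Diff2 finite_subset mem_Collect_eq subsetI)
    then show ?thesis using g1 by simp
  qed
  have "card (Sigma A Bad) = (\<Sum>a\<in>A. card (Bad a))" using finA finBad by simp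
  also have "\<dots> \<le> (\<Sum>a\<in>A. 2 ^ k - 1)" by (rule sum_mono) (rule bB)
  finally have cb: "card (Sigma A Bad) \<le> card A * (2 ^ k - 1)" by simp
  have p: "(1::nat) \<le> 2 ^ k" by simp
  have cbr: "real (card (Sigma A Bad)) \<le> real (card A) * (2 ^ k - 1)"
  proof -
    have "real (2 ^ k - 1) = 2 ^ k - 1" using p by (simp add: of_nat_diff)
    then show ?thesis using of_nat_mono[OF cb] by (metis of_nat_mult)
  qed
  show ?thesis
  proof (cases "card A = 0")
    case True then show ?thesis unfolding set cO by simp
  next
    case False
    then have pos: "real (card A) * 2 ^ k > 0" by simp
    have "real (card (Sigma A Bad)) / real (card \<Omega>) = real (card (Sigma A Bad)) / (real (card A) * 2 ^ k)"
      unfolding cO by simp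
    also have "\<dots> \<le> (real (card A) * (2 ^ k - 1)) / (real (card A) * 2 ^ k)"
      using divide_right_mono[OF cbr, of "real (card A) * 2 ^ k"] pos by linarith
    also have "\<dots> = 1 - 1 / 2 ^ k" using False by (simp add: field_simps)
    finally show ?thesis unfolding set .
  qed
qed

end
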